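(* Let $T>0$, let $f:(0,T)\to\mathbb{R}$ be nondecreasing and $g:(0,T)\to\mathbb{R}$ be of bounded variation, both left-continuous and bounded, with $f\ge g$ on $(0,T)$, and suppose there is $C>0$ such that: (i) for every $\varepsilon>0$, every $t$ with $f(t)>g(t)+\varepsilon$ and every $t'$ with $0\le t'-t<\varepsilon/C$, $f(t')=f(t)$ and $f(t')>g(t')$; (ii) $f(t^+)-f(t)=[g(t^+)-g(t)]^+$ for all $t$; (iii) $g(t_2)-g(t_1)\le C(t_2-t_1)$ for all $t_1<t_2$ in $[a,b)$ whenever $[a,b)\subset\{f>g\}$. Then for every $[a,b)\subset(0,T)$, $$(\partial_tg)^+([a,b))\le f(b)-f(a)+C\,\mathcal{L}^1([a,b)\cap\{f>g\}).$$
   Context: $(\partial_tg)^+$ is the positive part of the distributional derivative of $g$; for left-continuous $g$, $(\partial_tg)^+([a,b))=\sup\{\sum_{i=1}^m(g(t_i)-g(t_{i-1}))^+:a=t_0<t_1<\dots<t_m=b\}$. $h(t^+)$ denotes the right limit. *)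

theory Defs
  imports "HOL-Analysis.Analysis"
begin

definition bounded_variation_on :: "(real \<Rightarrow> real) \<Rightarrow> real set \<Rightarrow> bool" where
  "bounded_variation_on g S \<longleftrightarrow>
     (\<exists>B. \<forall>(t::nat \<Rightarrow> real) m. (\<forall>i\<le>m. t i \<in> S) \<and> (\<forall>i<m. t i < t (Suc i)) \<longrightarrow>
        (\<Sum>i\<in>{1..m}. \<bar>g (t i) - g (t (i - 1))\<bar>) \<le> B)"

text \<open>Positive part of the distributional derivative of a left-continuous g on [a,b):
  sup over partitions a = t_0 < ... < t_m = b of the sums of positive increments.\<close>
definition pos_deriv_measure :: "(real \<Rightarrow> real) \<Rightarrow> real \<Rightarrow> real \<Rightarrow> real" where
  "pos_deriv_measure g a b =
     Sup {(\<Sum>i\<in>{1..m}. max 0 (g (t i) - g (t (i - 1)))) | (t::nat \<Rightarrow> real) m.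
            t 0 = a \<and> t m = b \<and> (\<forall>i<m. t i < t (Suc i))}"

end

theory Submission
  imports Defs
begin

lemma fin_Ico_Int: "emeasure lborel ({a..<b::real} \<inter> V) \<noteq> \<infinity>"
proof -
  have "bounded ({a..<b::real} \<inter> V)" by (simp add: bounded_Int)
  then show ?thesis using emeasure_bounded_finite by (metis less_irrefl)
qed

lemma meas_split:
  assumes V: "V \<in> sets lborel" and "a \<le> x" "x \<le> (y::real)"
  shows "measure lborel ({a..<y} \<inter> V) = measure lborel ({a..<x} \<inter> V) + measure lborel ({x..<y} \<inter> V)"
proof -
  have "{a..<y} \<inter> V = ({a..<x} \<inter> V) \<union> ({x..<y} \<inter> V)" using assms by auto
  moreover have "measure lborel (({a..<x} \<inter> V) \<union> ({x..<y} \<inter> V)) = measure lborel ({a..<x} \<inter> V) + measure lborel ({x..<y} \<inter> V)"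
    using fin_Ico_Int[of a x V] fin_Ico_Int[of x y V] V by (intro measure_Union) (auto intro: sets.Int)
  ultimately show ?thesis by simp
qed

lemma meas_le: assumes V: "V \<in> sets lborel" and "x \<le> y"
  shows "measure lborel ({x..<y::real} \<inter> V) \<le> y - x"
proof -
  have "{x..<y} \<in> fmeasurable lborel" using assms by (intro fmeasurableI) auto
  then have "measure lborel ({x..<y} \<inter> V) \<le> measure lborel {x..<y}"
    using V by (intro measure_mono_fmeasurable) (auto intro: sets.Int)
  then show ?thesis using assms by simp
qed

lemma meas_full: assumes "{x..<y} \<subseteq> V" "x \<le> (y::real)"
  shows "measure lborel ({x..<y} \<inter> V) = y - x"
proof -
  have "{x..<y} \<inter> V = {x..<y}" using assms by auto
  thus ?thesis using assms by simp
qed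

lemma W_meas:
  fixes W :: "real set"
  assumes h: "\<forall>x\<in>W. \<exists>y>x. {x..<y} \<subseteq> W"
  shows "W \<in> sets lborel"
proof -
  obtain Y where Y: "\<And>x. x \<in> W \<Longrightarrow> Y x > x \<and> {x..<Y x} \<subseteq> W" using h by metis
  have "\<exists>q\<in>\<rat>. x < q \<and> q < Y x" if "x \<in> W" for x
    using Rats_dense_in_real Y[OF that] by blast
  then obtain Q where Q: "\<And>x. x \<in> W \<Longrightarrow> Q x \<in> \<rat> \<and> x < Q x \<and> Q x < Y x" by metis
  let ?D = "W - interior W"
  have inj: "inj_on Q ?D"
  proof (rule inj_onI)
    fix x x' assume x: "x \<in> ?D" and x': "x' \<in> ?D" and e: "Q x = Q x'"
    show "x = x'"
    proof (rule ccontr)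
      assume "x \<noteq> x'"
      then consider "x < x'" | "x' < x" by linarith
      then show False
      proof cases
        case 1
        have "{x<..<Y x} \<subseteq> W" using Y[of x] x by auto
        hence "{x<..<Y x} \<subseteq> interior W" by (simp add: interior_maximal)
        moreover have "x' \<in> {x<..<Y x}" using 1 Q[of x] Q[of x'] x x' e by auto
        ultimately show False using x' by auto
      next
        case 2
        have "{x'<..<Y x'} \<subseteq> W" using Y[of x'] x' by auto
        hence "{x'<..<Y x'} \<subseteq> interior W" by (simp add: interior_maximal)
        moreover have "x \<in> {x'<..<Y x'}" using 2 Q[of x] Q[of x'] x x' e by auto
        ultimately show False using x by auto
      qed
    qed
  qed
  have "Q ` ?D \<subseteq> \<rat>" using Q by auto
  hence "countable (Q ` ?D)" using countable_rat countable_subset by blast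
  hence "countable ?D" using inj countable_image_inj_on by blast
  hence "?D \<in> sets lborel" using countable_imp_null_set_lborel by blast
  moreover have "interior W \<in> sets lborel" by simp
  moreover have "W = interior W \<union> ?D" using interior_subset by blast
  ultimately show ?thesis by (metis sets.Un)
qed

lemma chain_mono: "(\<forall>i<m. t i < t (Suc i)) \<Longrightarrow> i \<le> j \<Longrightarrow> j \<le> m \<Longrightarrow> t i \<le> (t j::real)"
proof (induction j)
  case 0 then show ?case by simp
next
  case (Suc j)
  show ?case
  proof (cases "i = Suc j")
    case True then show ?thesis by simp
  next
    case False
    then have "t i \<le> t j" using Suc by simp
    also have "t j < t (Suc j)" using Suc by simp
    finally show ?thesis by simp
  qed
qed

lemma telesc: "(\<Sum>i\<in>{1..(m::nat)}. F (t i) - F (t (i-1))) = F (t m) - (F (t 0) :: real)"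
  by (induction m) (simp_all add: sum.cl_ivl_Suc)


theorem lemma7p2:
  fixes T C :: real and f g :: "real \<Rightarrow> real"
  assumes T_pos: "T > 0"
    and f_mono: "mono_on {0<..<T} f"
    and g_bv: "bounded_variation_on g {0<..<T}"
    and f_leftcont: "\<forall>t\<in>{0<..<T}. continuous (at_left t) f"
    and g_leftcont: "\<forall>t\<in>{0<..<T}. continuous (at_left t) g"
    and f_bdd: "bounded (f ` {0<..<T})"
    and g_bdd: "bounded (g ` {0<..<T})"
    and f_ge_g: "\<forall>t\<in>{0<..<T}. f t \<ge> g t"
    and C_pos: "C > 0"
    and cond_i: "\<forall>\<epsilon>>0. \<forall>t\<in>{0<..<T}. f t > g t + \<epsilon> \<longrightarrow>
                   (\<forall>t'\<in>{0<..<T}. 0 \<le> t' - t \<and> t' - t < \<epsilon> / C \<longrightarrow> f t' = f t \<and> f t' > g t')"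
    and cond_ii: "\<forall>t\<in>{0<..<T}. Lim (at_right t) f - f t = max 0 (Lim (at_right t) g - g t)"
    and cond_iii: "\<forall>a b. {a..<b} \<subseteq> {0<..<T} \<and> (\<forall>t\<in>{a..<b}. f t > g t) \<longrightarrow>
                     (\<forall>t1\<in>{a..<b}. \<forall>t2\<in>{a..<b}. t1 < t2 \<longrightarrow> g t2 - g t1 \<le> C * (t2 - t1))"
  shows "\<forall>a b. 0 < a \<and> a \<le> b \<and> b < T \<longrightarrow>
           pos_deriv_measure g a b \<le> f b - f a + C * measure lborel ({a..<b} \<inter> {t. f t > g t})"
proof (intro allI impI)
  fix a b :: real
  assume ab: "0 < a \<and> a \<le> b \<and> b < T"
  hence a0: "0 < a" and ab': "a \<le> b" and bT: "b < T" by auto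
  define V where "V = {a..<b} \<inter> {t. f t > g t}"
  have propg: "\<exists>\<delta>>0. \<forall>y. x \<le> y \<and> y < x + \<delta> \<and> y < T \<longrightarrow> f y = f x \<and> f y > g y"
    if "0 < x" "x < T" "f x > g x" for x
  proof -
    define e where "e = (f x - g x) / 2"
    have e: "e > 0" "f x > g x + e" using that by (auto simp: e_def field_simps)
    show ?thesis
    proof (intro exI[of _ "e / C"] conjI allI impI)
      show "e / C > 0" using e C_pos by simp
    next
      fix y assume y: "x \<le> y \<and> y < x + e / C \<and> y < T"
      have yI: "y \<in> {0<..<T}" using y that by auto
      have xI: "x \<in> {0<..<T}" using that by auto
      have "0 \<le> y - x \<and> y - x < e / C" using y by simp
      from cond_i[rule_format, OF e(1) xI e(2) yI this]
      show "f y = f x" "f y > g y" by auto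
    qed
  qed
  have Vm: "V \<in> sets lborel"
  proof (rule W_meas, intro ballI)
    fix x assume x: "x \<in> V"
    hence x': "0 < x" "x < T" "f x > g x" "a \<le> x" "x < b" using a0 bT by (auto simp: V_def)
    obtain \<delta> where d: "\<delta> > 0" "\<forall>y. x \<le> y \<and> y < x + \<delta> \<and> y < T \<longrightarrow> f y = f x \<and> f y > g y"
      using propg[OF x'(1-3)] by blast
    show "\<exists>y>x. {x..<y} \<subseteq> V"
    proof (intro exI[of _ "min (x+\<delta>) b"] conjI subsetI)
      show "x < min (x+\<delta>) b" using d(1) x'(5) by simp
    next
      fix z assume z: "z \<in> {x..<min (x+\<delta>) b}"
      hence z': "x \<le> z" "z < x + \<delta>" "z < b" by auto
      hence "z < T" using bT by simp
      hence "f z > g z" using d(2) z' by blast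
      thus "z \<in> V" using z' x'(4) by (simp add: V_def)
    qed
  qed
  define \<mu> where "\<mu> x = measure lborel ({a..<x} \<inter> V)" for x
  have mudiff: "\<mu> y - \<mu> x = measure lborel ({x..<y} \<inter> V)" if "a \<le> x" "x \<le> y" for x y
    using meas_split[OF Vm that] by (simp add: \<mu>_def)
  have mumono: "\<mu> x \<le> \<mu> y" if "a \<le> x" "x \<le> y" for x y
    using mudiff[OF that] measure_nonneg[of lborel "{x..<y} \<inter> V"] by linarith
  define \<psi> where "\<psi> x = f x - g x + C * \<mu> x" for x
  have locl: "\<exists>\<delta>>0. \<forall>y. x \<le> y \<and> y < x + \<delta> \<and> y \<le> b \<longrightarrow> \<psi> x \<le> \<psi> y"
    if x: "a \<le> x" "x < b" for x
  proof -
    have x0: "0 < x" "x < T" using x a0 bT by auto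
    show ?thesis
    proof (cases "f x > g x")
      case False
      hence fx: "f x = g x" using f_ge_g x0 by force
      show ?thesis
      proof (intro exI[of _ 1] conjI allI impI)
        fix y assume y: "x \<le> y \<and> y < x + 1 \<and> y \<le> b"
        have "f y \<ge> g y" using f_ge_g y x0 bT by auto
        moreover have "\<mu> x \<le> \<mu> y" using mumono x y by auto
        ultimately show "\<psi> x \<le> \<psi> y" using fx C_pos unfolding \<psi>_def
          by (smt (verit) mult_left_mono)
      qed simp
    next
      case True
      obtain \<delta> where d: "\<delta> > 0" "\<forall>y. x \<le> y \<and> y < x + \<delta> \<and> y < T \<longrightarrow> f y = f x \<and> f y > g y"
        using propg[OF x0 True] by blast
      show ?thesis
      proof (intro exI[of _ \<delta>] conjI allI impI)
        fix y assume y: "x \<le> y \<and> y < x + \<delta> \<and> y \<le> b"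
        have dd: "f w = f x \<and> f w > g w" if "x \<le> w" "w < x + \<delta>" "w < T" for w
          using d(2) that by blast
        have fy: "f y = f x" using dd[of y] y bT by linarith
        have sub: "{x..<y} \<subseteq> V"
        proof
          fix w assume w: "w \<in> {x..<y}"
          hence "x \<le> w" "w < x + \<delta>" "w < T" "a \<le> w" "w < b" using y bT x by auto
          thus "w \<in> V" using dd[of w] by (simp add: V_def)
        qed
        have mu: "\<mu> y - \<mu> x = y - x" using mudiff[of x y] meas_full[OF sub] x y by simp
        have gy: "g y - g x \<le> C * (y - x)"
        proof (cases "x = y")
          case False
          define y' where "y' = min (x + \<delta>) T"
          have I: "{x..<y'} \<subseteq> {0<..<T}" using x0 by (auto simp: y'_def)
          have "\<forall>t\<in>{x..<y'}. f t > g t"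
          proof
            fix w assume "w \<in> {x..<y'}"
            hence "x \<le> w" "w < x + \<delta>" "w < T" by (auto simp: y'_def)
            thus "f w > g w" using dd[of w] by blast
          qed
          moreover have "x \<in> {x..<y'}" "y \<in> {x..<y'}" using y d(1) bT x0 by (auto simp: y'_def)
          moreover have "x < y" using False y by simp
          ultimately show ?thesis using cond_iii[rule_format, of x y' x y] I by blast
        qed simp
        show "\<psi> x \<le> \<psi> y" unfolding \<psi>_def using fy mu gy by (smt (verit) right_diff_distrib)
      qed (use d in simp)
    qed
  qed
  have global: "\<psi> s \<le> \<psi> t" if st: "a \<le> s" "s \<le> t" "t \<le> b" for s t
  proof (rule ccontr)
    assume neg: "\<not> \<psi> s \<le> \<psi> t"
    define S where "S = {x. s \<le> x \<and> x \<le> t \<and> (\<forall>y. s \<le> y \<and> y \<le> x \<longrightarrow> \<psi> s \<le> \<psi> y)}"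
    define z where "z = Sup S"
    have sS: "s \<in> S" using st by (auto simp: S_def)
    have bdd: "bdd_above S" by (rule bdd_aboveI[of _ t]) (simp add: S_def)
    have zs: "s \<le> z" using sS bdd by (simp add: z_def cSup_upper)
    have zt: "z \<le> t" unfolding z_def
    proof (rule cSup_least)
      show "S \<noteq> {}" using sS by blast
    qed (simp add: S_def)
    have below: "\<psi> s \<le> \<psi> y" if yy: "s \<le> y" "y < z" for y
    proof -
      obtain x where "x \<in> S" "y < x" using less_cSupD[of S y] sS yy by (auto simp: z_def)
      thus ?thesis using yy by (auto simp: S_def)
    qed
    have zval: "\<psi> s \<le> \<psi> z"
    proof (cases "z = s")
      case False
      hence zs': "s < z" using zs by simp
      have z0: "z \<in> {0<..<T}" using zs zt st a0 bT by auto
      have lim: "((\<lambda>y. f y - g y) \<longlongrightarrow> f z - g z) (at_left z)"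
      proof (rule tendsto_diff)
        show "(f \<longlongrightarrow> f z) (at_left z)" using f_leftcont z0 by (simp add: continuous_within)
        show "(g \<longlongrightarrow> g z) (at_left z)" using g_leftcont z0 by (simp add: continuous_within)
      qed
      have ev: "\<forall>\<^sub>F y in at_left z. \<psi> s - C * \<mu> z \<le> f y - g y"
      proof -
        have "\<forall>\<^sub>F y in at_left z. s < y \<and> y < z" using eventually_at_left_real[OF zs'] by simp
        then show ?thesis
        proof (rule eventually_mono)
          fix y assume y: "s < y \<and> y < z"
          have 1: "\<psi> s \<le> \<psi> y" using below[of y] y by simp
          have "\<mu> y \<le> \<mu> z" using mumono[of y z] y st by simp
          hence "C * \<mu> y \<le> C * \<mu> z" using C_pos by (simp add: mult_left_mono)
          with 1 show "\<psi> s - C * \<mu> z \<le> f y - g y" unfolding \<psi>_def by linarith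
        qed
      qed
      have "\<psi> s - C * \<mu> z \<le> f z - g z"
        by (rule tendsto_lowerbound[OF lim ev]) simp
      thus ?thesis unfolding \<psi>_def by simp
    qed simp
    have zS: "z \<in> S"
    proof -
      have "\<psi> s \<le> \<psi> y" if "s \<le> y" "y \<le> z" for y
      proof (cases "y = z")
        case True thus ?thesis using zval by simp
      next
        case False thus ?thesis using below that by simp
      qed
      thus ?thesis using zs zt by (simp add: S_def)
    qed
    have "z < t" using zS neg by (auto simp: S_def)
    obtain \<delta> where d: "\<delta> > 0" "\<forall>y. z \<le> y \<and> y < z + \<delta> \<and> y \<le> b \<longrightarrow> \<psi> z \<le> \<psi> y"
      using locl[of z] zs st \<open>z < t\<close> by auto
    define z' where "z' = min (z + \<delta>/2) t"
    have "z' \<in> S"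
    proof -
      have "\<psi> s \<le> \<psi> y" if "s \<le> y" "y \<le> z'" for y
      proof (cases "y \<le> z")
        case True then show ?thesis using zS that by (auto simp: S_def)
      next
        case False
        hence "\<psi> z \<le> \<psi> y" using d that st by (auto simp: z'_def)
        thus ?thesis using zval by simp
      qed
      thus ?thesis using zs \<open>z < t\<close> d(1) by (auto simp: S_def z'_def)
    qed
    hence "z' \<le> z" using bdd by (simp add: z_def cSup_upper)
    thus False using d \<open>z < t\<close> by (auto simp: z'_def)
  qed
  define F where "F x = f x + C * \<mu> x" for x
  have Finc: "max 0 (g y - g x) \<le> F y - F x" if "a \<le> x" "x \<le> y" "y \<le> b" for x y
  proof -
    have "f x \<le> f y" using f_mono that a0 bT by (auto intro: mono_onD)
    moreover have "\<mu> x \<le> \<mu> y" using mumono that by auto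
    moreover have "\<psi> x \<le> \<psi> y" using global that by auto
    ultimately show ?thesis using C_pos unfolding F_def \<psi>_def
      by (smt (verit) mult_left_mono)
  qed
  have muB: "\<mu> b = measure lborel ({a..<b} \<inter> {t. f t > g t})"
    by (simp add: \<mu>_def V_def Int_absorb1 inf.absorb2 flip: Int_assoc)
  have mua: "\<mu> a = 0" by (simp add: \<mu>_def)
  show "pos_deriv_measure g a b \<le> f b - f a + C * measure lborel ({a..<b} \<inter> {t. f t > g t})"
    unfolding pos_deriv_measure_def
  proof (rule cSup_least)
    let ?t = "\<lambda>i::nat. if i = 0 then a else b"
    let ?m = "if a = b then 0 else 1::nat"
    have "(\<Sum>i\<in>{1..?m}. max 0 (g (?t i) - g (?t (i - 1)))) \<in> {(\<Sum>i\<in>{1..m}. max 0 (g (t i) - g (t (i - 1)))) | (t::nat \<Rightarrow> real) m.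
            t 0 = a \<and> t m = b \<and> (\<forall>i<m. t i < t (Suc i))}"
      using ab' by (intro CollectI exI[of _ ?t] exI[of _ ?m]) auto
    thus "{(\<Sum>i\<in>{1..m}. max 0 (g (t i) - g (t (i - 1)))) | (t::nat \<Rightarrow> real) m.
            t 0 = a \<and> t m = b \<and> (\<forall>i<m. t i < t (Suc i))} \<noteq> {}" by blast
  next
    fix x assume "x \<in> {(\<Sum>i\<in>{1..m}. max 0 (g (t i) - g (t (i - 1)))) | (t::nat \<Rightarrow> real) m.
            t 0 = a \<and> t m = b \<and> (\<forall>i<m. t i < t (Suc i))}"
    then obtain t m where x: "x = (\<Sum>i\<in>{1..m}. max 0 (g (t i) - g (t (i - 1))))"
      and t: "t 0 = a" "t m = b" "\<forall>i<m. t i < t (Suc i)" by blast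
    have "x \<le> (\<Sum>i\<in>{1..m}. F (t i) - F (t (i - 1)))"
      unfolding x
    proof (rule sum_mono)
      fix i assume i: "i \<in> {1..m}"
      have "a \<le> t (i - 1)" using chain_mono[OF t(3), of 0 "i - 1"] t i by auto
      moreover have "t (i - 1) \<le> t i" using chain_mono[OF t(3), of "i - 1" i] i by auto
      moreover have "t i \<le> b" using chain_mono[OF t(3), of i m] t i by auto
      ultimately show "max 0 (g (t i) - g (t (i - 1))) \<le> F (t i) - F (t (i - 1))"
        using Finc by blast
    qed
    also have "\<dots> = F b - F a" using telesc[of F t m] t by simp
    also have "\<dots> = f b - f a + C * measure lborel ({a..<b} \<inter> {t. f t > g t})"
      using muB mua by (simp add: F_def)
    finally show "x \<le> f b - f a + C * measure lborel ({a..<b} \<inter> {t. f t > g t})" .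
  qed
qed

end
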